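(* For every integer $n\geq 2$: $\mathcal{C}_{B}(n,1)=n!$, $\mathcal{C}_{B}(n,2)=(n-1)!$, and $\mathcal{C}_{B}(n,n-1)\leqslant n$, with equality $\mathcal{C}_{B}(n,n-1)=n$ whenever $n\notin\{3,5\}$.
   Context: Let $S_n$ be the symmetric group on $[n]=\{1,\dots,n\}$; a permutation is written in vector notation $\pi=(\pi(1),\dots,\pi(n))$. A permutation $\sigma\in S_m$ is called minimal if $\sigma(i+1)\neq\sigma(i)+1$ for all $1\leqslant i\leqslant m-1$. The block permutation distance $d_B(\pi_1,\pi_2)$ between $\pi_1,\pi_2\in S_n$ equals $d$ if $\pi_1=(\psi_1,\psi_2,\dots,\psi_{d+1})$ and $\pi_2=(\psi_{\sigma(1)},\dots,\psi_{\sigma(d+1)})$ for some minimal $\sigma\in S_{d+1}$, where $\psi_k=(\pi_1(i_{k-1}+1),\dots,\pi_1(i_k))$ for some indices $0=i_0<i_1<\dots<i_{d+1}=n$. Equivalently, with the characteristic set $A(\pi)=\{(\pi(i),\pi(i+1)):1\leqslant i<n\}$, one has $d_B(\pi_1,\pi_2)=|A(\pi_1)\setminus A(\pi_2)|$. For positive integers $n,d$, an $(n,d)$-permutation code is a subset $\mathcal{C}\subseteq S_n$ with $d_B(\sigma,\pi)\geqslant d$ for all distinct $\sigma,\pi\in\mathcal{C}$, and $\mathcal{C}_B(n,d)$ denotes the maximum size of such a code. *)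

theory Defs
  imports Main
begin

text \<open>Permutations of [n] in vector notation, as lists (p ! (i-1) = pi(i)).\<close>
definition perms :: "nat \<Rightarrow> nat list set" where
  "perms n = {p. distinct p \<and> set p = {1..n}}"

definition charset :: "nat list \<Rightarrow> (nat \<times> nat) set" where
  "charset p = {(p ! i, p ! (i + 1)) | i. i + 1 < length p}"

definition dB :: "nat list \<Rightarrow> nat list \<Rightarrow> nat" where
  "dB p q = card (charset p - charset q)"

definition is_perm_code :: "nat \<Rightarrow> nat \<Rightarrow> nat list set \<Rightarrow> bool" where
  "is_perm_code n d C \<longleftrightarrow> C \<subseteq> perms n \<and>
     (\<forall>s\<in>C. \<forall>p\<in>C. s \<noteq> p \<longrightarrow> d \<le> dB s p)"

definition CB :: "nat \<Rightarrow> nat \<Rightarrow> nat" where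
  "CB n d = Max (card ` {C. is_perm_code n d C})"

end

theory Submission
  imports Defs "HOL-Combinatorics.Multiset_Permutations"
begin

lemma perms_eq: "perms n = permutations_of_set {1..n}"
  by (auto simp: perms_def permutations_of_set_def)

lemma charset_Nil[simp]: "charset [] = {}"
  by (auto simp: charset_def)

lemma charset_single[simp]: "charset [x] = {}"
  by (auto simp: charset_def)

lemma charset_Cons2[simp]: "charset (x # y # xs) = insert (x, y) (charset (y # xs))"
proof -
  have "charset (x # y # xs) = {((x # y # xs) ! i, (x # y # xs) ! (i + 1)) | i. i + 1 < length (x # y # xs)}"
    by (simp add: charset_def)
  also have "\<dots> = insert (x,y) {((y # xs) ! i, (y # xs) ! (i + 1)) | i. i + 1 < length (y # xs)}"
  proof (intro set_eqI iffI)
    fix z assume "z \<in> {((x # y # xs) ! i, (x # y # xs) ! (i + 1)) | i. i + 1 < length (x # y # xs)}"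
    then obtain i where z: "z = ((x # y # xs) ! i, (x # y # xs) ! (i + 1))" "i + 1 < length (x # y # xs)" by blast
    show "z \<in> insert (x,y) {((y # xs) ! i, (y # xs) ! (i + 1)) | i. i + 1 < length (y # xs)}"
    proof (cases i)
      case 0 then show ?thesis using z by simp
    next
      case (Suc j) then show ?thesis using z by auto
    qed
  next
    fix z assume "z \<in> insert (x,y) {((y # xs) ! i, (y # xs) ! (i + 1)) | i. i + 1 < length (y # xs)}"
    then show "z \<in> {((x # y # xs) ! i, (x # y # xs) ! (i + 1)) | i. i + 1 < length (x # y # xs)}"
    proof
      assume "z = (x,y)" then show ?thesis by (auto intro!: exI[of _ 0])
    next
      assume "z \<in> {((y # xs) ! i, (y # xs) ! (i + 1)) | i. i + 1 < length (y # xs)}"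
      then obtain i where "z = ((y # xs) ! i, (y # xs) ! (i + 1))" "i + 1 < length (y # xs)" by blast
      then show ?thesis by (auto intro!: exI[of _ "Suc i"])
    qed
  qed
  also have "\<dots> = insert (x,y) (charset (y # xs))" by (simp add: charset_def)
  finally show ?thesis .
qed

lemma charset_Cons: "charset (x # xs) = (if xs = [] then {} else insert (x, hd xs) (charset xs))"
  by (cases xs) auto

lemma charset_fst: "(a,b) \<in> charset xs \<Longrightarrow> a \<in> set xs"
  by (induction xs rule: induct_list012) auto

lemma charset_snd: "(a,b) \<in> charset xs \<Longrightarrow> b \<in> set xs"
  by (induction xs rule: induct_list012) auto

lemma finite_charset[simp]: "finite (charset xs)"
  by (induction xs rule: induct_list012) auto

lemma card_charset: "distinct xs \<Longrightarrow> card (charset xs) = length xs - 1"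
proof (induction xs rule: induct_list012)
  case (3 x y zs)
  have "(x,y) \<notin> charset (y # zs)" using 3(3) charset_fst by fastforce
  then show ?case using 3 by (simp add: card_insert_if)
qed auto

lemma charset_append:
  "charset (xs @ ys) = charset xs \<union> charset ys \<union> (if xs \<noteq> [] \<and> ys \<noteq> [] then {(last xs, hd ys)} else {})"
proof (induction xs rule: induct_list012)
  case 1 then show ?case by simp
next
  case (2 x) then show ?case by (cases ys) auto
next
  case (3 x y zs) then show ?case by auto
qed

lemma charset_tl_sub: "charset xs \<subseteq> charset (x # xs)"
  by (cases xs) auto

lemma hd_no_pred:
  assumes "distinct xs" "(a, hd xs) \<in> charset xs" shows False
proof -
  from assms(2) obtain i where i: "a = xs ! i" "hd xs = xs ! (i+1)" "i + 1 < length xs"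
    by (auto simp: charset_def)
  then have "xs ! 0 = xs ! (i+1)" by (metis hd_conv_nth list.size(3) not_less0)
  with nth_eq_iff_index_eq[OF assms(1), of 0 "i+1"] i(3) show False by linarith
qed

lemma nonhd_has_pred:
  assumes "b \<in> set xs" "b \<noteq> hd xs" shows "\<exists>a. (a, b) \<in> charset xs"
proof -
  from assms(1) obtain j where j: "j < length xs" "xs ! j = b" by (auto simp: in_set_conv_nth)
  have "j \<noteq> 0"
  proof
    assume "j = 0" then have "b = hd xs" using j by (cases xs) auto
    then show False using assms(2) by simp
  qed
  then obtain i where "j = i + 1" by (cases j) auto
  then show ?thesis using j by (auto simp: charset_def)
qed

lemma eq_by_charset_hd:
  "distinct p \<Longrightarrow> distinct q \<Longrightarrow> set p = set q \<Longrightarrow> hd p = hd q \<Longrightarrow> charset p \<subseteq> charset q \<Longrightarrow> p = q"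
proof (induction p arbitrary: q)
  case Nil then show ?case by simp
next
  case (Cons a p')
  then obtain q' where q: "q = a # q'" by (cases q) auto
  show ?case
  proof (cases "p' = []")
    case True then show ?thesis using Cons.prems q by (auto simp: subset_singleton_iff)
  next
    case False
    have "set p' = set q'" using Cons.prems q by auto
    then have q'ne: "q' \<noteq> []" using False by auto
    have "(a, hd p') \<in> charset q" using Cons.prems(5) False by (simp add: charset_Cons)
    then have "(a, hd p') = (a, hd q') \<or> (a, hd p') \<in> charset q'" using q'ne q by (simp add: charset_Cons)
    moreover have "a \<notin> set q'" using Cons.prems q by auto
    ultimately have hd: "hd p' = hd q'" using charset_fst by fastforce
    have "charset p' \<subseteq> charset q'"
    proof
      fix z assume z: "z \<in> charset p'"
      then have "z \<in> charset q" using Cons.prems(5) charset_tl_sub by blast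
      then have "z = (a, hd q') \<or> z \<in> charset q'" using q q'ne by (simp add: charset_Cons)
      moreover have "fst z \<noteq> a" using z Cons.prems(1) charset_fst[of "fst z" "snd z" p'] by auto
      ultimately show "z \<in> charset q'" by auto
    qed
    moreover have "set p' = set q'" using Cons.prems q by auto
    ultimately show ?thesis using Cons q hd by auto
  qed
qed

lemma eq_by_charset:
  assumes "distinct p" "distinct q" "set p = set q" "charset p \<subseteq> charset q" shows "p = q"
proof -
  have len: "length p = length q" using assms by (metis distinct_card)
  have "charset p = charset q"
    using assms(4) card_charset[OF assms(1)] card_charset[OF assms(2)] len
    by (simp add: card_subset_eq)
  show ?thesis
  proof (cases "p = []")
    case True then show ?thesis using assms by simp
  next
    case False
    have "hd p = hd q"
    proof (rule ccontr)
      assume "hd p \<noteq> hd q"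
      moreover have "hd p \<in> set q" using False assms(3) by auto
      ultimately obtain a where "(a, hd p) \<in> charset q" using nonhd_has_pred by metis
      then show False using hd_no_pred[OF assms(1)] \<open>charset p = charset q\<close> by simp
    qed
    then show ?thesis using eq_by_charset_hd assms by blast
  qed
qed

lemma eq_by_charset1:
  "distinct p \<Longrightarrow> distinct q \<Longrightarrow> set p = set q \<Longrightarrow> p \<noteq> [] \<Longrightarrow> hd p = hd q \<Longrightarrow>
   card (charset p - charset q) \<le> 1 \<Longrightarrow> p = q"
proof (induction p arbitrary: q)
  case Nil then show ?case by simp
next
  case (Cons a p')
  then obtain q' where q: "q = a # q'" by (cases q) auto
  show ?case
  proof (cases "p' = []")
    case True then show ?thesis using Cons.prems q by (auto simp: subset_singleton_iff)
  next
    case False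
    have "set p' = set q'" using Cons.prems q by auto
    then have q'ne: "q' \<noteq> []" using False by auto
    have aq: "a \<notin> set q'" using Cons.prems q by auto
    have ap: "a \<notin> set p'" using Cons.prems by auto
    have sets: "set p' = set q'" using Cons.prems q by auto
    have cq: "charset q = insert (a, hd q') (charset q')" using q q'ne by (simp add: charset_Cons)
    have cp: "charset (a # p') = insert (a, hd p') (charset p')" using False by (simp add: charset_Cons)
    show ?thesis
    proof (cases "hd p' = hd q'")
      case True
      have "charset p' - charset q' \<subseteq> charset (a # p') - charset q"
        using cp cq ap charset_fst by fastforce
      then have "card (charset p' - charset q') \<le> 1"
        using Cons.prems(6) by (meson card_mono finite_Diff finite_charset le_trans)
      then have "p' = q'" using Cons.IH[of q'] Cons.prems sets True q False by auto
      then show ?thesis using q by simp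
    next
      case False2: False
      have notin: "(a, hd p') \<notin> charset q" using cq False2 aq charset_fst by fastforce
      have "charset p' \<subseteq> charset q'"
      proof (rule ccontr)
        assume "\<not> charset p' \<subseteq> charset q'"
        then obtain z where z: "z \<in> charset p'" "z \<notin> charset q'" by auto
        have "fst z \<noteq> a" using z ap charset_fst[of "fst z" "snd z" p'] by auto
        then have "z \<notin> charset q" using z cq by auto
        then have "{z, (a, hd p')} \<subseteq> charset (a # p') - charset q" using z notin cp by auto
        moreover have "z \<noteq> (a, hd p')" using \<open>fst z \<noteq> a\<close> by auto
        ultimately have "card {z, (a, hd p')} \<le> card (charset (a # p') - charset q)"
          by (intro card_mono) auto
        then show False using Cons.prems(6) \<open>z \<noteq> (a, hd p')\<close> by simp
      qed
      then have "p' = q'" using eq_by_charset[of p' q'] Cons.prems(1) Cons.prems(2) q sets by auto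
      then show ?thesis using False2 by simp
    qed
  qed
qed

lemma finite_perms[simp]: "finite (perms n)"
  by (simp add: perms_eq)

lemma card_perms: "card (perms n) = fact n"
  by (simp add: perms_eq)

lemma code_sub: "is_perm_code n d C \<Longrightarrow> C \<subseteq> perms n"
  by (simp add: is_perm_code_def)

lemma finite_codes: "finite {C. is_perm_code n d C}"
proof -
  have "{C. is_perm_code n d C} \<subseteq> Pow (perms n)" by (auto simp: is_perm_code_def)
  then show ?thesis by (rule finite_subset) simp
qed

lemma empty_code: "is_perm_code n d {}"
  by (simp add: is_perm_code_def)

lemma CB_le:
  assumes "\<And>C. is_perm_code n d C \<Longrightarrow> card C \<le> c" shows "CB n d \<le> c"
proof -
  have ne: "{C. is_perm_code n d C} \<noteq> {}" using empty_code by blast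
  show ?thesis unfolding CB_def using finite_codes ne assms
    by (subst Max_le_iff) auto
qed

lemma CB_ge:
  assumes "is_perm_code n d C" shows "card C \<le> CB n d"
  unfolding CB_def using finite_codes assms
  by (intro Max_ge) auto

lemma CB_eqI:
  assumes "is_perm_code n d C0" "card C0 = c" "\<And>C. is_perm_code n d C \<Longrightarrow> card C \<le> c"
  shows "CB n d = c"
  using CB_le[of n d c] CB_ge[of n d C0] assms by force

lemma perms_distinct: "p \<in> perms n \<Longrightarrow> distinct p"
  by (simp add: perms_def)

lemma perms_set: "p \<in> perms n \<Longrightarrow> set p = {1..n}"
  by (simp add: perms_def)

lemma perms_length: "p \<in> perms n \<Longrightarrow> length p = n"
proof -
  assume p: "p \<in> perms n"
  have "length p = card (set p)" using distinct_card[OF perms_distinct[OF p]] by simp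
  then show ?thesis by (simp add: perms_set[OF p])
qed

lemma card_charset_perm: "p \<in> perms n \<Longrightarrow> card (charset p) = n - 1"
  by (simp add: card_charset perms_distinct perms_length)

lemma perms_code1: "is_perm_code n 1 (perms n)"
  unfolding is_perm_code_def
proof (intro conjI ballI impI subset_refl)
  fix s p assume sp: "s \<in> perms n" "p \<in> perms n" "s \<noteq> p"
  have "charset s - charset p \<noteq> {}"
  proof
    assume "charset s - charset p = {}"
    then have "charset s \<subseteq> charset p" by blast
    then have "s = p" using eq_by_charset sp perms_distinct perms_set by metis
    then show False using sp by simp
  qed
  then show "1 \<le> dB s p" unfolding dB_def
    by (simp add: Suc_leI card_gt_0_iff)
qed

lemma CB1: "CB n 1 = fact n"
  by (rule CB_eqI[OF perms_code1 card_perms])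
     (simp add: card_mono[OF finite_perms, of _ n, unfolded card_perms] code_sub)

section \<open>d = n - 1\<close>

definition offdiag :: "nat \<Rightarrow> (nat \<times> nat) set" where
  "offdiag n = {(a,b). a \<in> {1..n} \<and> b \<in> {1..n} \<and> a \<noteq> b}"

lemma charset_offdiag: "p \<in> perms n \<Longrightarrow> charset p \<subseteq> offdiag n"
proof
  fix z assume p: "p \<in> perms n" and z: "z \<in> charset p"
  then obtain i where i: "z = (p ! i, p ! (i+1))" "i + 1 < length p" by (auto simp: charset_def)
  have "p ! i \<noteq> p ! (i+1)" using perms_distinct[OF p] i(2) by (simp add: nth_eq_iff_index_eq)
  moreover have "p ! i \<in> set p" "p ! (i+1) \<in> set p" using i(2) by auto
  ultimately show "z \<in> offdiag n" using i(1) perms_set[OF p] by (auto simp: offdiag_def)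
qed

lemma finite_offdiag: "finite (offdiag n)"
proof -
  have "offdiag n \<subseteq> {1..n} \<times> {1..n}" by (auto simp: offdiag_def)
  then show ?thesis by (rule finite_subset) simp
qed

lemma card_offdiag: "card (offdiag n) = n * (n - 1)"
proof -
  have "offdiag n = ({1..n} \<times> {1..n}) - (\<lambda>a. (a,a)) ` {1..n}"
    by (auto simp: offdiag_def)
  moreover have "card ((\<lambda>a. (a,a)) ` {1..n}) = n"
    by (subst card_image) (auto simp: inj_on_def)
  moreover have "(\<lambda>a. (a,a)) ` {1..n} \<subseteq> {1..n} \<times> {1..n}" by auto
  ultimately have "card (offdiag n) = n * n - n"
    by (simp add: card_Diff_subset card_cartesian_product)
  then show ?thesis by (simp add: diff_mult_distrib2)
qed

lemma code_disjoint:
  assumes "is_perm_code n (n - 1) C" "s \<in> C" "p \<in> C" "s \<noteq> p"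
  shows "charset s \<inter> charset p = {}"
proof -
  have sp: "s \<in> perms n" "p \<in> perms n" using assms code_sub by auto
  have "n - 1 \<le> card (charset s - charset p)" using assms unfolding is_perm_code_def dB_def by blast
  moreover have "card (charset s - charset p) \<le> card (charset s)" by (intro card_mono) auto
  ultimately have "card (charset s - charset p) = card (charset s)"
    using card_charset_perm[OF sp(1)] by linarith
  then have "charset s - charset p = charset s"
    by (metis Diff_subset card_subset_eq finite_charset)
  then show ?thesis by blast
qed

lemma CB_upper:
  assumes "n \<ge> 2" shows "CB n (n - 1) \<le> n"
proof (rule CB_le)
  fix C assume C: "is_perm_code n (n - 1) C"
  have sub: "C \<subseteq> perms n" using code_sub[OF C] .
  have fin: "finite C" using sub finite_subset finite_perms by blast
  have ne: "charset p \<noteq> {}" if "p \<in> C" for p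
    using card_charset_perm[of p n] sub that assms by fastforce
  have inj: "inj_on charset C"
  proof (rule inj_onI)
    fix s p assume "s \<in> C" "p \<in> C" "charset s = charset p"
    then show "s = p" using code_disjoint[OF C] ne by fastforce
  qed
  have disj: "pairwise disjnt (charset ` C)"
    unfolding pairwise_def disjnt_def using code_disjoint[OF C] by fastforce
  have "card (\<Union> (charset ` C)) = sum card (charset ` C)"
    by (rule card_Union_disjoint[OF disj]) (auto intro: fin)
  also have "\<dots> = sum (\<lambda>p. card (charset p)) C" by (rule sum.reindex[OF inj, unfolded comp_def])
  also have "\<dots> = sum (\<lambda>p. n - 1) C" using card_charset_perm sub by (intro sum.cong) auto
  also have "\<dots> = card C * (n - 1)" by simp
  finally have eq: "card (\<Union> (charset ` C)) = card C * (n - 1)" .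
  have "\<Union> (charset ` C) \<subseteq> offdiag n" using charset_offdiag sub by blast
  then have "card (\<Union> (charset ` C)) \<le> n * (n - 1)"
    using card_mono[OF finite_offdiag] card_offdiag by metis
  with eq have "card C * (n - 1) \<le> n * (n - 1)" by simp
  then show "card C \<le> n" using assms by simp
qed

section \<open>d = 2\<close>

definition cyc :: "nat list \<Rightarrow> (nat \<times> nat) set" where
  "cyc xs = charset xs \<union> (if xs = [] then {} else {(last xs, hd xs)})"

lemma cyc_rotate1: "cyc (rotate1 xs) = cyc xs"
proof (cases xs)
  case Nil then show ?thesis by simp
next
  case (Cons x ys)
  show ?thesis
  proof (cases "ys = []")
    case True then show ?thesis using Cons by simp
  next
    case False
    have "cyc (rotate1 xs) = charset (ys @ [x]) \<union> {(x, hd ys)}"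
      using Cons False by (simp add: cyc_def)
    also have "\<dots> = charset ys \<union> {(last ys, x)} \<union> {(x, hd ys)}"
      using False by (simp add: charset_append)
    also have "\<dots> = cyc xs" using Cons False by (auto simp: cyc_def charset_Cons)
    finally show ?thesis .
  qed
qed

lemma cyc_rotate: "cyc (rotate k xs) = cyc xs"
  by (induction k) (simp_all add: cyc_rotate1)

lemma charset_sub_cyc: "charset xs \<subseteq> cyc xs"
  by (auto simp: cyc_def)

definition S1 :: "nat \<Rightarrow> nat list set" where
  "S1 n = {p \<in> perms n. hd p = 1}"

lemma S1_code: assumes "n \<ge> 1" shows "is_perm_code n 2 (S1 n)"
  unfolding is_perm_code_def
proof (intro conjI ballI impI)
  show "S1 n \<subseteq> perms n" by (auto simp: S1_def)
next
  fix s p assume s: "s \<in> S1 n" and p: "p \<in> S1 n" and sp: "s \<noteq> p"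
  show "2 \<le> dB s p"
  proof (rule ccontr)
    assume "\<not> 2 \<le> dB s p"
    then have c: "card (charset s - charset p) \<le> 1" by (simp add: dB_def)
    have "s \<noteq> []" using s assms perms_length[of s n] by (auto simp: S1_def)
    then have "s = p" using eq_by_charset1[OF _ _ _ _ _ c] s p
      by (auto simp: S1_def perms_def)
    then show False using sp by simp
  qed
qed

lemma card_S1: assumes "n \<ge> 1" shows "card (S1 n) = fact (n - 1)"
proof -
  have "S1 n = (\<lambda>xs. 1 # xs) ` permutations_of_set {2..n}"
  proof (intro set_eqI iffI)
    fix p assume "p \<in> S1 n"
    then have p: "distinct p" "set p = {1..n}" "hd p = 1" by (auto simp: S1_def perms_def)
    then obtain xs where "p = 1 # xs" using assms by (cases p) auto
    moreover have "xs \<in> permutations_of_set {2..n}"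
    proof -
      have "set xs = {1..n} - {1}" using p \<open>p = 1 # xs\<close> by auto
      also have "\<dots> = {2..n}" by auto
      finally show ?thesis using p \<open>p = 1 # xs\<close> by (auto simp: permutations_of_set_def)
    qed
    ultimately show "p \<in> (\<lambda>xs. 1 # xs) ` permutations_of_set {2..n}" by blast
  next
    fix p assume "p \<in> (\<lambda>xs. 1 # xs) ` permutations_of_set {2..n}"
    then obtain xs where "p = 1 # xs" "set xs = {2..n}" "distinct xs"
      by (auto simp: permutations_of_set_def)
    then show "p \<in> S1 n" using assms by (auto simp: S1_def perms_def)
  qed
  then have "card (S1 n) = card (permutations_of_set {2..n})"
    by (simp add: card_image)
  then show ?thesis by simp
qed

lemma code2_bound:
  assumes C: "is_perm_code n 2 C" and n: "n \<ge> 1" shows "card C \<le> fact (n - 1)"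
proof -
  have sub: "C \<subseteq> perms n" using code_sub[OF C] .
  define k where "k p = (SOME k. k < length p \<and> p ! k = 1)" for p :: "nat list"
  define f where "f p = rotate (k p) p" for p
  have kp: "k p < length p \<and> p ! k p = 1" if "p \<in> perms n" for p
  proof -
    have "1 \<in> set p" using perms_set[OF that] n by auto
    then have "\<exists>k. k < length p \<and> p ! k = 1" by (simp add: in_set_conv_nth)
    then show ?thesis unfolding k_def by (rule someI_ex)
  qed
  have fS: "f p \<in> S1 n" if "p \<in> perms n" for p
  proof -
    have ne: "p \<noteq> []" using kp[OF that] by auto
    have "hd (f p) = p ! (k p mod length p)" unfolding f_def using ne by (rule hd_rotate_conv_nth)
    then have "hd (f p) = 1" using kp[OF that] by simp
    moreover have "f p \<in> perms n" using that by (simp add: f_def perms_def)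
    ultimately show ?thesis by (simp add: S1_def)
  qed
  have "inj_on f C"
  proof (rule inj_onI)
    fix s p assume s: "s \<in> C" and p: "p \<in> C" and e: "f s = f p"
    have "cyc s = cyc (f s)" by (simp add: f_def cyc_rotate)
    also have "\<dots> = cyc p" using e by (simp add: f_def cyc_rotate)
    finally have "cyc s = cyc p" .
    then have "charset s \<subseteq> charset p \<union> {(last p, hd p)}"
      using charset_sub_cyc[of s] by (auto simp: cyc_def split: if_splits)
    then have "charset s - charset p \<subseteq> {(last p, hd p)}" by blast
    then have "card (charset s - charset p) \<le> card {(last p, hd p)}"
      by (intro card_mono) auto
    then have "card (charset s - charset p) \<le> 1" by simp
    then have "\<not> 2 \<le> dB s p" by (simp add: dB_def)
    then show "s = p" using C s p unfolding is_perm_code_def by blast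
  qed
  then have "card C = card (f ` C)" by (simp add: card_image)
  also have "\<dots> \<le> card (S1 n)"
    using fS sub by (intro card_mono) (auto simp: S1_def)
  finally show ?thesis using card_S1[OF n] by simp
qed

lemma CB2: assumes "n \<ge> 1" shows "CB n 2 = fact (n - 1)"
  by (rule CB_eqI[OF S1_code[OF assms] card_S1[OF assms] code2_bound[OF _ assms]])

lemma CB_lower:
  assumes N: "N \<ge> 2" and fin: "finite I" and cI: "card I = N"
    and P: "\<And>i. i \<in> I \<Longrightarrow> F i \<in> perms N"
    and D: "\<And>i j. i \<in> I \<Longrightarrow> j \<in> I \<Longrightarrow> i \<noteq> j \<Longrightarrow> charset (F i) \<inter> charset (F j) = {}"
  shows "N \<le> CB N (N - 1)"
proof -
  have ne: "charset (F i) \<noteq> {}" if "i \<in> I" for i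
    using card_charset_perm[OF P[OF that]] N by fastforce
  have inj: "inj_on F I"
  proof (rule inj_onI)
    fix i j assume "i \<in> I" "j \<in> I" "F i = F j"
    then show "i = j" using D ne by fastforce
  qed
  have code: "is_perm_code N (N - 1) (F ` I)"
    unfolding is_perm_code_def
  proof (intro conjI ballI impI)
    show "F ` I \<subseteq> perms N" using P by auto
  next
    fix s p assume "s \<in> F ` I" "p \<in> F ` I" "s \<noteq> p"
    then obtain i j where ij: "i \<in> I" "j \<in> I" "s = F i" "p = F j" "i \<noteq> j" by auto
    then have "charset s - charset p = charset s" using D by blast
    then show "N - 1 \<le> dB s p" using card_charset_perm[OF P[OF ij(1)]] ij by (simp add: dB_def)
  qed
  have "card (F ` I) = N" using card_image[OF inj] cI by simp
  then show ?thesis using CB_ge[OF code] by simp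
qed

lemma charset_map: "charset (map f xs) = (\<lambda>(a,b). (f a, f b)) ` charset xs"
  by (induction xs rule: induct_list012) auto

lemma charset_map_upt: "charset (map g [0..<L]) = {(g t, g (Suc t)) | t. Suc t < L}"
proof (intro set_eqI iffI)
  fix z assume "z \<in> charset (map g [0..<L])"
  then obtain i where "z = (map g [0..<L] ! i, map g [0..<L] ! (i+1))" "i + 1 < L"
    by (auto simp: charset_def)
  then show "z \<in> {(g t, g (Suc t)) | t. Suc t < L}" by auto
next
  fix z assume "z \<in> {(g t, g (Suc t)) | t. Suc t < L}"
  then obtain t where "z = (g t, g (Suc t))" "Suc t < L" by auto
  then have "z = (map g [0..<L] ! t, map g [0..<L] ! (t+1))" "t + 1 < length (map g [0..<L])" by auto
  then show "z \<in> charset (map g [0..<L])" unfolding charset_def by blast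
qed

lemma shift_perms:
  assumes "distinct xs" "set xs = {0..<N}" shows "map Suc xs \<in> perms N"
proof -
  have "set (map Suc xs) = {1..N}"
  proof -
    have "set (map Suc xs) = Suc ` {0..<N}" using assms(2) by simp
    also have "\<dots> = {1..N}" by (auto simp: image_iff)
    finally show ?thesis .
  qed
  then show ?thesis using assms by (simp add: perms_def distinct_map)
qed

lemma shift_disj:
  assumes "charset xs \<inter> charset ys = {}"
  shows "charset (map Suc xs) \<inter> charset (map Suc ys) = {}"
  using assms unfolding charset_map by auto

section \<open>The Walecki-type cycles\<close>

definition bz :: "nat \<Rightarrow> int" where
  "bz k = (if even k then - int (k div 2) else int ((k + 1) div 2))"

definition vtx :: "nat \<Rightarrow> nat \<Rightarrow> nat \<Rightarrow> nat" where
  "vtx n i k = nat ((int i + bz k) mod int n)"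

definition idxz :: "int \<Rightarrow> int \<Rightarrow> int \<Rightarrow> int" where
  "idxz m u v = (if u = m then v else if v = m then (u + m div 2) mod m else
     (let d = (v - u) mod m in
       if odd d then (u + (d - 1) div 2) mod m else (u + m div 2 + d div 2) mod m))"

definition idx :: "nat \<Rightarrow> nat \<Rightarrow> nat \<Rightarrow> nat" where
  "idx n u v = nat (idxz (int n) (int u) (int v))"

lemma vtx_int: "n > 0 \<Longrightarrow> int (vtx n i k) = (int i + bz k) mod int n"
  by (simp add: vtx_def)

lemma vtx_lt: "n > 0 \<Longrightarrow> vtx n i k < n"
  unfolding vtx_def by (simp add: nat_less_iff)

lemma idx_sound:
  assumes n: "even n" "n \<ge> 2" and i: "i < n" and k: "Suc k < n"
  shows "idx n (vtx n i k) (vtx n i (Suc k)) = i"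
proof -
  define m where "m = int n"
  obtain h where h: "m = 2 * h" using n(1) unfolding m_def by (metis even_two_times_div_two of_nat_mult of_nat_numeral)
  have hm: "m div 2 = h" using h by simp
  have mpos: "m > 0" "n > 0" using n unfolding m_def by simp_all
  have u1: "int (vtx n i k) \<noteq> m" "int (vtx n i (Suc k)) \<noteq> m"
    using vtx_lt[OF mpos(2)] unfolding m_def by (metis of_nat_eq_iff less_irrefl)+
  have vi: "int (vtx n i k) = (int i + bz k) mod m" "int (vtx n i (Suc k)) = (int i + bz (Suc k)) mod m"
    using vtx_int[OF mpos(2)] unfolding m_def by auto
  have ii: "int i mod m = int i" using i unfolding m_def by simp
  show ?thesis
  proof (cases "even k")
    case True
    then obtain s where s: "k = 2 * s" by blast
    have b1: "bz k = - int s" "bz (Suc k) = int s + 1" using s by (auto simp: bz_def)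
    have d: "(int (vtx n i (Suc k)) - int (vtx n i k)) mod m = 2 * int s + 1"
    proof -
      have "(int (vtx n i (Suc k)) - int (vtx n i k)) mod m = ((int i + (int s + 1)) - (int i + - int s)) mod m"
        unfolding vi b1 by (simp add: mod_diff_eq)
      also have "\<dots> = (2 * int s + 1) mod m" by (simp add: algebra_simps)
      also have "\<dots> = 2 * int s + 1" using k s unfolding m_def by (intro mod_pos_pos_trivial) auto
      finally show ?thesis .
    qed
    have "idxz m (int (vtx n i k)) (int (vtx n i (Suc k))) = (int (vtx n i k) + int s) mod m"
      using u1 d unfolding idxz_def Let_def by simp
    also have "\<dots> = ((int i + - int s) mod m + int s) mod m" unfolding vi b1 by simp
    also have "\<dots> = int i mod m" by (simp add: mod_simps)
    also have "\<dots> = int i" using ii .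
    finally show ?thesis unfolding idx_def m_def by simp
  next
    case False
    then obtain s where s: "k = 2 * s + 1" by (metis oddE)
    have b1: "bz k = int s + 1" "bz (Suc k) = - (int s + 1)" using s by (auto simp: bz_def)
    have d: "(int (vtx n i (Suc k)) - int (vtx n i k)) mod m = m - 2 * (int s + 1)"
    proof -
      have "(int (vtx n i (Suc k)) - int (vtx n i k)) mod m = ((int i + - (int s + 1)) - (int i + (int s + 1))) mod m"
        unfolding vi b1 by (simp add: mod_diff_eq)
      also have "\<dots> = (m + (- 2 * (int s + 1))) mod m" by (simp add: algebra_simps)
      also have "\<dots> = m - 2 * (int s + 1)" using k s unfolding m_def by (subst mod_pos_pos_trivial) auto
      finally show ?thesis .
    qed
    have ev: "even (m - 2 * (int s + 1))" using h by simp
    have dv: "(m - 2 * (int s + 1)) div 2 = h - (int s + 1)" using h by simp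
    have "idxz m (int (vtx n i k)) (int (vtx n i (Suc k))) = (int (vtx n i k) + h + (h - (int s + 1))) mod m"
      using u1 d ev dv hm unfolding idxz_def Let_def by simp
    also have "\<dots> = ((int i + (int s + 1)) mod m + h + (h - (int s + 1))) mod m" unfolding vi b1 by simp
    also have "\<dots> = ((int i + (int s + 1)) mod m + (h + (h - (int s + 1)))) mod m" by (simp add: add.assoc)
    also have "\<dots> = ((int i + (int s + 1)) + (h + (h - (int s + 1)))) mod m" by (simp add: mod_add_left_eq)
    also have "\<dots> = (int i + m) mod m" using h by (simp add: algebra_simps)
    also have "\<dots> = int i" using ii by simp
    finally show ?thesis unfolding idx_def m_def by simp
  qed
qed

lemma mod_eq_close:
  fixes a b m :: int
  assumes "a mod m = b mod m" "\<bar>a - b\<bar> < m" shows "a = b"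
proof -
  have "(a - b) mod m = 0" using assms(1) by (simp add: mod_eq_dvd_iff)
  then have "m dvd (a - b)" by (simp add: dvd_eq_mod_eq_0)
  show ?thesis
  proof (rule ccontr)
    assume "a \<noteq> b"
    then have "\<bar>m\<bar> \<le> \<bar>a - b\<bar>" using dvd_imp_le_int \<open>m dvd (a - b)\<close> by simp
    then show False using assms(2) by linarith
  qed
qed

lemma bz_even: "bz (2 * s) = - int s" by (simp add: bz_def)
lemma bz_odd: "bz (2 * s + 1) = int s + 1" by (simp add: bz_def)

lemma bz_range: assumes "k < 2 * h" shows "1 - int h \<le> bz k \<and> bz k \<le> int h"
proof (cases "even k")
  case True
  then obtain s where s: "k = 2 * s" by blast
  then have "s < h" using assms by simp
  then show ?thesis using s bz_even by simp
next
  case False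
  then obtain s where s: "k = 2 * s + 1" by (metis oddE)
  then have "s < h" using assms by simp
  then show ?thesis using s bz_odd by simp
qed

lemma bz_inj: assumes "bz k = bz k'" shows "k = k'"
proof -
  obtain s where s: "k = 2 * s \<or> k = 2 * s + 1" by (metis oddE evenE)
  obtain s' where s': "k' = 2 * s' \<or> k' = 2 * s' + 1" by (metis oddE evenE)
  show ?thesis using s s' assms bz_even bz_odd by auto
qed

lemma vtx_inj:
  assumes n: "even n" "n \<ge> 2" and k: "k < n" "k' < n" and e: "vtx n i k = vtx n i k'"
  shows "k = k'"
proof -
  obtain h where h: "n = 2 * h" using n(1) by blast
  have np: "n > 0" using n by simp
  have "int (vtx n i k) = int (vtx n i k')" using e by simp
  then have eq: "(int i + bz k) mod int n = (int i + bz k') mod int n" unfolding vtx_int[OF np] .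
  have r1: "1 - int h \<le> bz k \<and> bz k \<le> int h" using bz_range k(1) h by blast
  have r2: "1 - int h \<le> bz k' \<and> bz k' \<le> int h" using bz_range k(2) h by blast
  have hn: "int n = 2 * int h" using h by simp
  have "\<bar>(int i + bz k) - (int i + bz k')\<bar> < int n" using r1 r2 hn by linarith
  then have "int i + bz k = int i + bz k'" using mod_eq_close[OF eq] by blast
  then show ?thesis using bz_inj by simp
qed

definition W :: "nat \<Rightarrow> nat \<Rightarrow> nat list" where
  "W n i = map (vtx n i) [0..<n]"

lemma W_distinct: "even n \<Longrightarrow> n \<ge> 2 \<Longrightarrow> distinct (W n i)"
  unfolding W_def by (simp add: distinct_map inj_on_def vtx_inj)

lemma W_set: assumes "even n" "n \<ge> 2" shows "set (W n i) = {0..<n}"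
proof -
  have "set (W n i) \<subseteq> {0..<n}" using vtx_lt assms by (auto simp: W_def)
  moreover have "card (set (W n i)) = n" using distinct_card[OF W_distinct[OF assms]] by (simp add: W_def)
  ultimately show ?thesis by (simp add: card_subset_eq)
qed

lemma W_arcs: assumes "even n" "n \<ge> 2" "i < n" "(u,v) \<in> charset (W n i)" shows "idx n u v = i"
  using assms(4) idx_sound[OF assms(1,2,3)] unfolding W_def charset_map_upt by auto

lemma even_lower: assumes "even N" "N \<ge> 2" shows "N \<le> CB N (N - 1)"
proof (rule CB_lower[where I = "{0..<N}" and F = "\<lambda>i. map Suc (W N i)"])
  fix i assume "i \<in> {0..<N}"
  show "map Suc (W N i) \<in> perms N" using shift_perms W_distinct W_set assms by blast
next
  fix i j assume ij: "i \<in> {0..<N}" "j \<in> {0..<N}" "i \<noteq> j"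
  have "charset (W N i) \<inter> charset (W N j) = {}"
  proof (rule ccontr)
    assume "charset (W N i) \<inter> charset (W N j) \<noteq> {}"
    then obtain u v where "(u,v) \<in> charset (W N i)" "(u,v) \<in> charset (W N j)" by auto
    then have "idx N u v = i" "idx N u v = j" using W_arcs[OF assms] ij by (metis atLeastLessThan_iff)+
    then show False using ij by simp
  qed
  then show "charset (map Suc (W N i)) \<inter> charset (map Suc (W N j)) = {}" by (rule shift_disj)
qed (use assms in auto)

lemma charset_cyc_minus:
  assumes "distinct ys" "length ys \<ge> 2" shows "charset ys = cyc ys - {(last ys, hd ys)}"
proof -
  have "(last ys, hd ys) \<notin> charset ys" using hd_no_pred[OF assms(1)] by blast
  moreover have "ys \<noteq> []" using assms(2) by auto
  ultimately show ?thesis by (auto simp: cyc_def)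
qed

lemma card_cyc: assumes "distinct ys" "length ys \<ge> 2" shows "card (cyc ys) = length ys"
proof -
  have "(last ys, hd ys) \<notin> charset ys" using hd_no_pred[OF assms(1)] by blast
  moreover have "ys \<noteq> []" using assms(2) by auto
  ultimately have "card (cyc ys) = Suc (card (charset ys))" by (simp add: cyc_def)
  then show ?thesis using card_charset[OF assms(1)] assms(2) by simp
qed

lemma rotate_last_hd:
  assumes "Suc j < length xs"
  shows "last (rotate (Suc j) xs) = xs ! j" "hd (rotate (Suc j) xs) = xs ! Suc j"
proof -
  have r: "rotate (Suc j) xs = drop (Suc j) xs @ take (Suc j) xs"
    using assms by (simp add: rotate_drop_take)
  have "take (Suc j) xs \<noteq> []" using assms by auto
  then have "last (rotate (Suc j) xs) = last (take (Suc j) xs)" using r by simp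
  also have "\<dots> = take (Suc j) xs ! (length (take (Suc j) xs) - 1)"
    using \<open>take (Suc j) xs \<noteq> []\<close> by (rule last_conv_nth)
  also have "length (take (Suc j) xs) - 1 = j" using assms by simp
  also have "take (Suc j) xs ! j = xs ! j" using assms by simp
  finally show "last (rotate (Suc j) xs) = xs ! j" .
  have "drop (Suc j) xs \<noteq> []" using assms by auto
  then have "hd (rotate (Suc j) xs) = hd (drop (Suc j) xs)" using r by simp
  also have "\<dots> = xs ! Suc j" using assms by (simp add: hd_drop_conv_nth)
  finally show "hd (rotate (Suc j) xs) = xs ! Suc j" .
qed

lemma cut_cycle:
  assumes "distinct xs" "length xs \<ge> 2" "e \<in> cyc xs"
  shows "\<exists>ys. distinct ys \<and> set ys = set xs \<and> charset ys = cyc xs - {e}"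
proof (cases "e = (last xs, hd xs)")
  case True then show ?thesis using charset_cyc_minus[OF assms(1,2)] assms by blast
next
  case False
  then have "e \<in> charset xs" using assms(3) by (auto simp: cyc_def split: if_splits)
  then obtain j where j: "e = (xs ! j, xs ! (j+1))" "j + 1 < length xs" by (auto simp: charset_def)
  define ys where "ys = rotate (Suc j) xs"
  have "distinct ys" "set ys = set xs" "length ys = length xs" using assms(1) by (simp_all add: ys_def)
  moreover have "cyc ys = cyc xs" unfolding ys_def by (rule cyc_rotate)
  moreover have "(last ys, hd ys) = e" using rotate_last_hd[of j xs] j by (simp add: ys_def)
  ultimately show ?thesis using charset_cyc_minus[of ys] assms(2) by metis
qed

definition offd :: "nat \<Rightarrow> (nat \<times> nat) set" where
  "offd M = {(a,b). a < M \<and> b < M \<and> a \<noteq> b}"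

lemma card_offd: "card (offd M) = M * (M - 1)"
proof -
  have "offd M = ({0..<M} \<times> {0..<M}) - (\<lambda>a. (a,a)) ` {0..<M}"
    by (auto simp: offd_def)
  moreover have "card ((\<lambda>a. (a,a)) ` {0..<M}) = M"
    by (subst card_image) (auto simp: inj_on_def)
  moreover have "(\<lambda>a. (a,a)) ` {0..<M} \<subseteq> {0..<M} \<times> {0..<M}" by auto
  ultimately have "card (offd M) = M * M - M"
    by (simp add: card_Diff_subset card_cartesian_product)
  then show ?thesis by (simp add: diff_mult_distrib2)
qed

lemma finite_offd: "finite (offd M)"
proof -
  have "offd M \<subseteq> {0..<M} \<times> {0..<M}" by (auto simp: offd_def)
  then show ?thesis by (rule finite_subset) simp
qed

lemma charset_offd:
  assumes "distinct xs" "set xs \<subseteq> {0..<M}" shows "charset xs \<subseteq> offd M"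
proof
  fix z assume z: "z \<in> charset xs"
  then obtain i where i: "z = (xs ! i, xs ! (i+1))" "i + 1 < length xs" by (auto simp: charset_def)
  have "xs ! i \<noteq> xs ! (i+1)" using assms(1) i(2) by (simp add: nth_eq_iff_index_eq)
  moreover have "xs ! i \<in> set xs" "xs ! (i+1) \<in> set xs" using i(2) by auto
  ultimately show "z \<in> offd M" using i(1) assms(2) by (auto simp: offd_def)
qed

lemma cyc_offd:
  assumes "distinct xs" "set xs \<subseteq> {0..<M}" "length xs \<ge> 2" shows "cyc xs \<subseteq> offd M"
proof -
  have "charset xs \<subseteq> offd M" using charset_offd assms by blast
  moreover have "(last xs, hd xs) \<in> offd M"
  proof -
    have ne: "xs \<noteq> []" using assms(3) by auto
    have "last xs \<in> set xs" "hd xs \<in> set xs" using ne by auto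
    moreover have "last xs \<noteq> hd xs"
    proof -
      have "last xs = xs ! (length xs - 1)" "hd xs = xs ! 0" using ne by (simp_all add: last_conv_nth hd_conv_nth)
      moreover have "length xs - 1 < length xs" "0 < length xs" using assms(3) by auto
      ultimately show ?thesis using nth_eq_iff_index_eq[OF assms(1)] assms(3) by fastforce
    qed
    ultimately show ?thesis using assms(2) by (auto simp: offd_def)
  qed
  ultimately show ?thesis by (auto simp: cyc_def)
qed

section \<open>The cycles with infinity\<close>

definition Dc :: "nat \<Rightarrow> nat \<Rightarrow> nat list" where
  "Dc n i = n # W n i"

context
  fixes n :: nat
  assumes n: "even n" "n \<ge> 2"
begin

lemma Dc_distinct: "distinct (Dc n i)"
  using W_distinct[OF n] W_set[OF n] by (simp add: Dc_def)

lemma Dc_set: "set (Dc n i) = {0..<Suc n}"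
  using W_set[OF n] by (auto simp: Dc_def)

lemma Dc_length: "length (Dc n i) = Suc n"
  by (simp add: Dc_def W_def)

lemma idx_from_inf: "v < n \<Longrightarrow> idx n n v = v"
  by (simp add: idx_def idxz_def)

lemma idx_to_inf: "u < n \<Longrightarrow> idx n u n = (u + n div 2) mod n"
proof -
  assume u: "u < n"
  have "int u \<noteq> int n" using u by simp
  then have "idxz (int n) (int u) (int n) = (int u + int n div 2) mod int n" by (simp add: idxz_def)
  also have "\<dots> = int ((u + n div 2) mod n)" by (simp add: zmod_int zdiv_int)
  finally show ?thesis by (simp add: idx_def)
qed

lemma Dc_arcs: assumes i: "i < n" and e: "(u,v) \<in> cyc (Dc n i)" shows "idx n u v = i"
proof -
  have np: "n > 0" using n by simp
  have W0: "hd (W n i) = i"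
  proof -
    have "hd (W n i) = vtx n i 0" using np by (simp add: W_def hd_map upt_conv_Cons)
    also have "\<dots> = i" using i by (simp add: vtx_def bz_def nat_mod_distrib)
    finally show ?thesis .
  qed
  obtain h where h0: "n = 2 * h" using n(1) by blast
  then have h: "n = 2 * h" "h \<ge> 1" using n(2) by auto
  have Wl: "last (W n i) = (i + h) mod n"
  proof -
    have "last (W n i) = vtx n i (n - 1)" using np by (simp add: W_def last_map)
    also have "n - 1 = 2 * (h - 1) + 1" using h by simp
    also have "vtx n i (2 * (h - 1) + 1) = (i + h) mod n"
      using h(2) unfolding vtx_def bz_odd by (simp add: nat_mod_distrib nat_add_distrib)
    finally show ?thesis .
  qed
  have Wne: "W n i \<noteq> []" using np by (simp add: W_def)
  have cycD: "cyc (Dc n i) = insert (n, i) (charset (W n i)) \<union> {((i + h) mod n, n)}"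
    using Wne W0 Wl by (simp add: cyc_def Dc_def charset_Cons)
  show ?thesis
  proof -
    consider "(u,v) = (n,i)" | "(u,v) \<in> charset (W n i)" | "(u,v) = ((i + h) mod n, n)"
      using e cycD by blast
    then show ?thesis
    proof cases
      case 1 then show ?thesis using idx_from_inf i by simp
    next
      case 2 then show ?thesis using W_arcs[OF n i] by blast
    next
      case 3
      have "(i + h) mod n < n" using np by simp
      then have "idx n u v = ((i + h) mod n + h) mod n" using 3 idx_to_inf h by simp
      also have "\<dots> = (i + h + h) mod n" by (simp add: mod_add_left_eq)
      also have "\<dots> = (i + n) mod n" using h(1) by (simp add: add.assoc mult_2)
      also have "\<dots> = i" using i by simp
      finally show ?thesis .
    qed
  qed
qed

lemma Dc_disj: assumes "i < n" "j < n" "i \<noteq> j" shows "cyc (Dc n i) \<inter> cyc (Dc n j) = {}"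
proof (rule ccontr)
  assume "cyc (Dc n i) \<inter> cyc (Dc n j) \<noteq> {}"
  then obtain u v where "(u,v) \<in> cyc (Dc n i)" "(u,v) \<in> cyc (Dc n j)" by auto
  then have "idx n u v = i" "idx n u v = j" using Dc_arcs assms by blast+
  then show False using assms by simp
qed

lemma Dc_cover: "(\<Union>i<n. cyc (Dc n i)) = offd (Suc n)"
proof -
  have sub: "cyc (Dc n i) \<subseteq> offd (Suc n)" for i
    using cyc_offd[OF Dc_distinct] Dc_set Dc_length n by simp
  have "card (\<Union>i<n. cyc (Dc n i)) = (\<Sum>i<n. card (cyc (Dc n i)))"
    by (rule card_UN_disjoint) (auto intro: finite_subset[OF sub finite_offd] dest: Dc_disj)
  also have "\<dots> = (\<Sum>i<n. Suc n)" using card_cyc[OF Dc_distinct] Dc_length n by simp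
  also have "\<dots> = card (offd (Suc n))" by (simp add: card_offd)
  finally show ?thesis using sub finite_offd
    by (intro card_subset_eq) auto
qed

lemma arc_owner: assumes "(u,v) \<in> offd (Suc n)" shows "idx n u v < n \<and> (u,v) \<in> cyc (Dc n (idx n u v))"
proof -
  obtain i where "i < n" "(u,v) \<in> cyc (Dc n i)" using assms Dc_cover by blast
  then show ?thesis using Dc_arcs by auto
qed

end

lemma odd_lower_from_R:
  assumes n: "even n" "n \<ge> 2"
    and Rd: "distinct R" and Rs: "set R = {0..<Suc n}"
    and Ri: "inj_on (\<lambda>(u,v). idx n u v) (charset R)"
    and Rr: "\<And>u v. (u,v) \<in> charset R \<Longrightarrow> idx n u v < n"
  shows "Suc n \<le> CB (Suc n) (Suc n - 1)"
proof -
  let ?f = "\<lambda>(u,v). idx n u v"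
  have lenR: "length R = Suc n" using distinct_card[OF Rd] Rs by simp
  have cR: "card (charset R) = n" using card_charset[OF Rd] lenR by simp
  have img: "?f ` charset R = {0..<n}"
  proof -
    have "?f ` charset R \<subseteq> {0..<n}" using Rr by auto
    moreover have "card (?f ` charset R) = n" using card_image[OF Ri] cR by simp
    ultimately show ?thesis by (simp add: card_subset_eq)
  qed
  have ex: "\<exists>r. r \<in> charset R \<and> ?f r = i \<and> r \<in> cyc (Dc n i)" if i: "i < n" for i
  proof -
    obtain r where r: "r \<in> charset R" "?f r = i" using img i by (metis atLeastLessThan_iff imageE zero_le)
    obtain u v where uv: "r = (u,v)" by (cases r)
    have "(u,v) \<in> offd (Suc n)" using charset_offd[OF Rd] Rs r uv by auto
    then have "(u,v) \<in> cyc (Dc n (idx n u v))" using arc_owner[OF n] by blast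
    then show ?thesis using r uv by auto
  qed
  define r where "r i = (SOME r. r \<in> charset R \<and> ?f r = i \<and> r \<in> cyc (Dc n i))" for i
  have r: "r i \<in> charset R \<and> ?f (r i) = i \<and> r i \<in> cyc (Dc n i)" if "i < n" for i
    unfolding r_def using someI_ex[OF ex[OF that]] .
  have exP: "\<exists>ys. distinct ys \<and> set ys = set (Dc n i) \<and> charset ys = cyc (Dc n i) - {r i}" if "i < n" for i
    using cut_cycle[OF Dc_distinct[OF n]] Dc_length[OF n] n r[OF that] by simp
  define P where "P i = (SOME ys. distinct ys \<and> set ys = set (Dc n i) \<and> charset ys = cyc (Dc n i) - {r i})" for i
  have P: "distinct (P i) \<and> set (P i) = {0..<Suc n} \<and> charset (P i) = cyc (Dc n i) - {r i}" if "i < n" for i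
    unfolding P_def using someI_ex[OF exP[OF that]] Dc_set[OF n] by simp
  define F where "F i = map Suc (if i < n then P i else R)" for i
  show ?thesis
  proof (rule CB_lower[where I = "{0..<Suc n}" and F = F])
    fix i assume "i \<in> {0..<Suc n}"
    show "F i \<in> perms (Suc n)" unfolding F_def using P Rd Rs
      by (cases "i < n") (auto intro: shift_perms)
  next
    fix i j assume ij: "i \<in> {0..<Suc n}" "j \<in> {0..<Suc n}" "i \<noteq> j"
    have key: "charset (P i) \<inter> charset R = {}" if i: "i < n" for i
    proof (rule ccontr)
      assume "charset (P i) \<inter> charset R \<noteq> {}"
      then obtain e where e: "e \<in> charset (P i)" "e \<in> charset R" by auto
      have "e \<in> cyc (Dc n i)" "e \<noteq> r i" using e(1) P[OF i] by auto
      then have "?f e = i" using Dc_arcs[OF n i] by (cases e) auto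
      then have "?f e = ?f (r i)" using r[OF i] by simp
      then have "e = r i" using inj_onD[OF Ri] e(2) r[OF i] by blast
      then show False using \<open>e \<noteq> r i\<close> by simp
    qed
    have "charset (if i < n then P i else R) \<inter> charset (if j < n then P j else R) = {}"
    proof (cases "i < n")
      case True note i = True
      show ?thesis
      proof (cases "j < n")
        case True
        then show ?thesis using i P Dc_disj[OF n i True ij(3)] by auto
      next
        case False then show ?thesis using i key by auto
      qed
    next
      case False
      then have "j < n" using ij by auto
      then show ?thesis using False key by auto
    qed
    then show "charset (F i) \<inter> charset (F j) = {}" unfolding F_def by (rule shift_disj)
  qed (use n in auto)
qed

lemma neg_mod: "0 < (c::int) \<Longrightarrow> c < m \<Longrightarrow> (- c) mod m = m - c"
  by (simp add: zmod_zminus1_eq_if)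

context
  fixes n :: nat
  assumes n: "even n" "n \<ge> 6"
begin

lemma idx_down:
  assumes u: "u < n" and c: "c \<le> u" "0 < c" "c < n"
  shows "int (idx n u (u - c)) =
    (let d = int n - int c in if odd d then (int u + (d - 1) div 2) mod int n else (int u + int n div 2 + d div 2) mod int n)"
proof -
  have ne: "int u \<noteq> int n" "int (u - c) \<noteq> int n" using u c by auto
  have "int (u - c) - int u = - int c" using c by simp
  then have d: "(int (u - c) - int u) mod int n = int n - int c" using c neg_mod[of "int c" "int n"] by simp
  have "idxz (int n) (int u) (int (u - c)) =
    (let d = int n - int c in if odd d then (int u + (d - 1) div 2) mod int n else (int u + int n div 2 + d div 2) mod int n)"
    using ne d by (simp add: idxz_def Let_def)
  moreover have "idxz (int n) (int u) (int (u - c)) \<ge> 0" using ne d n by (simp add: idxz_def Let_def)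
  ultimately show ?thesis by (simp add: idx_def)
qed

lemma n_half: "int n = 2 * int (n div 2)" using n(1) by (auto elim!: evenE)

lemma idx_m2: assumes "2 \<le> u" "u < n" shows "idx n u (u - 2) = u - 1"
proof -
  have "int (idx n u (u - 2)) = (int u + int n div 2 + (int n - 2) div 2) mod int n"
    using idx_down[OF assms(2) assms(1)] n n_half by (simp add: Let_def)
  also have "\<dots> = (int (u - 1) + int n) mod int n" using n_half assms by (simp add: of_nat_diff)
  also have "\<dots> = int (u - 1)" using assms by simp
  finally show ?thesis by simp
qed

lemma idx_m4: assumes "4 \<le> u" "u < n" shows "idx n u (u - 4) = u - 2"
proof -
  have "int (idx n u (u - 4)) = (int u + int n div 2 + (int n - 4) div 2) mod int n"
    using idx_down[OF assms(2) assms(1)] n n_half by (simp add: Let_def)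
  also have "\<dots> = (int (u - 2) + int n) mod int n" using n_half assms by (simp add: of_nat_diff)
  also have "\<dots> = int (u - 2)" using assms by simp
  finally show ?thesis by simp
qed

lemma idx_m1: assumes "1 \<le> u" "u < n" shows "idx n u (u - 1) = (u + n div 2 - 1) mod n"
proof -
  have "odd (int n - 1)" using n by simp
  then have "int (idx n u (u - 1)) = (int u + (int n - 1 - 1) div 2) mod int n"
    using idx_down[OF assms(2) assms(1)] n by (simp add: Let_def)
  also have "\<dots> = int (u + n div 2 - 1) mod int n" using n_half assms
    by (simp add: of_nat_diff algebra_simps)
  also have "\<dots> = int ((u + n div 2 - 1) mod n)" by (simp add: zmod_int)
  finally show ?thesis by simp
qed

lemma idx_wrap0: "idx n 0 (n - 2) = n - 1"
proof -
  have ne: "int 0 \<noteq> int n" "int (n - 2) \<noteq> int n" using n by auto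
  have d: "(int (n - 2) - int 0) mod int n = int n - 2" using n neg_mod[of 2 "int n"] by (simp add: of_nat_diff)
  have "idxz (int n) (int 0) (int (n - 2)) = (int n div 2 + (int n - 2) div 2) mod int n"
    using ne d n by (simp add: idxz_def Let_def)
  also have "int n div 2 + (int n - 2) div 2 = int n - 1" using n_half by simp
  also have "(int n - 1) mod int n = int n - 1" using n by (intro mod_pos_pos_trivial) auto
  finally show ?thesis using n by (simp add: idx_def)
qed

lemma idx_wrap1: "idx n 1 (n - 1) = 0"
proof -
  have ne: "int 1 \<noteq> int n" "int (n - 1) \<noteq> int n" using n by auto
  have d: "(int (n - 1) - int 1) mod int n = int n - 2" using n neg_mod[of 2 "int n"] by (simp add: of_nat_diff)
  have "idxz (int n) (int 1) (int (n - 1)) = (1 + int n div 2 + (int n - 2) div 2) mod int n"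
    using ne d n by (simp add: idxz_def Let_def)
  also have "\<dots> = 0" using n_half n by simp
  finally show ?thesis by (simp add: idx_def)
qed


lemma idx_m2': assumes "2 \<le> a" "a < int n" shows "idx n (nat a) (nat (a - 2)) = nat (a - 1)"
proof -
  have "nat (a - 2) = nat a - 2" "nat (a - 1) = nat a - 1" using assms by auto
  then show ?thesis using idx_m2[of "nat a"] assms by simp
qed

lemma idx_m4': assumes "4 \<le> a" "a < int n" shows "idx n (nat a) (nat (a - 4)) = nat (a - 2)"
proof -
  have "nat (a - 4) = nat a - 4" "nat (a - 2) = nat a - 2" using assms by auto
  then show ?thesis using idx_m4[of "nat a"] assms by simp
qed

lemma idx_m1': assumes "1 \<le> a" "a < int n" shows "idx n (nat a) (nat (a - 1)) = nat ((a + int n div 2 - 1) mod int n)"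
proof -
  have "nat (a - 1) = nat a - 1" using assms by auto
  then have "idx n (nat a) (nat (a - 1)) = (nat a + n div 2 - 1) mod n" using idx_m1[of "nat a"] assms by simp
  also have "\<dots> = nat ((a + int n div 2 - 1) mod int n)" using assms n
    by (simp add: nat_mod_distrib nat_diff_distrib nat_add_distrib nat_div_distrib)
  finally show ?thesis .
qed

lemma idx_out': assumes "0 \<le> a" "a < int n" shows "idx n (nat a) n = nat ((a + int n div 2) mod int n)"
proof -
  have "idx n (nat a) n = (nat a + n div 2) mod n" using idx_to_inf[of n "nat a"] n assms by simp
  also have "\<dots> = nat ((a + int n div 2) mod int n)" using assms n
    by (simp add: nat_mod_distrib nat_add_distrib nat_div_distrib)
  finally show ?thesis .
qed

lemma idx_in': assumes "0 \<le> a" "a < int n" shows "idx n n (nat a) = nat a"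
  using idx_from_inf[of n "nat a"] n assms by simp

end

definition gz :: "int \<Rightarrow> int \<Rightarrow> int" where
  "gz p t = (if t = 0 then 0 else if t \<le> p - 1 then 4*p + 2 - 2*t else if t \<le> 2*p - 1 then 4*p - 2*t
     else if t = 2*p then 4*p + 2 else if t \<le> 3*p + 1 then 6*p + 3 - 2*t
     else if t \<le> 4*p + 1 then 10*p + 5 - 2*t else 2*p + 2)"

definition ez :: "int \<Rightarrow> int \<Rightarrow> int" where
  "ez p t = (if t = 0 then 4*p + 1 else if t \<le> p - 2 then 4*p + 1 - 2*t else if t = p - 1 then 2*p + 2
     else if t \<le> 2*p - 2 then 4*p - 2*t - 1 else if t = 2*p - 1 then 2*p + 3
     else if t = 2*p then 2*p + 1 else if t \<le> 3*p then 6*p + 2 - 2*t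
     else if t = 3*p + 1 then 0 else if t \<le> 4*p then 10*p + 4 - 2*t else 1)"

lemma gz_inj: "p \<ge> 2 \<Longrightarrow> 0 \<le> t \<Longrightarrow> t \<le> 4*p + 2 \<Longrightarrow> 0 \<le> t' \<Longrightarrow> t' \<le> 4*p + 2 \<Longrightarrow> gz p t = gz p t' \<Longrightarrow> t = t'"
  unfolding gz_def by (auto split: if_splits; presburger)

lemma gz_range: "p \<ge> 2 \<Longrightarrow> 0 \<le> t \<Longrightarrow> t \<le> 4*p + 2 \<Longrightarrow> 0 \<le> gz p t \<and> gz p t \<le> 4*p + 2"
  unfolding gz_def by auto

lemma ez_inj: "p \<ge> 2 \<Longrightarrow> 0 \<le> t \<Longrightarrow> t \<le> 4*p + 1 \<Longrightarrow> 0 \<le> t' \<Longrightarrow> t' \<le> 4*p + 1 \<Longrightarrow> ez p t = ez p t' \<Longrightarrow> t = t'"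
  unfolding ez_def by (auto split: if_splits; presburger)

lemma ez_range: "p \<ge> 2 \<Longrightarrow> 0 \<le> t \<Longrightarrow> t \<le> 4*p + 1 \<Longrightarrow> 0 \<le> ez p t \<and> ez p t \<le> 4*p + 1"
  unfolding ez_def by auto

lemma gz_arc:
  fixes p :: nat
  assumes p: "p \<ge> 2" and t: "t < 4*p + 2"
  shows "idx (4*p+2) (nat (gz (int p) (int t))) (nat (gz (int p) (int (Suc t)))) = nat (ez (int p) (int t))"
proof -
  define n where "n = 4*p + 2"
  have n: "even n" "n \<ge> 6" using p by (auto simp: n_def)
  define P where "P = int p"
  have nn: "int n = 4 * P + 2" by (simp add: n_def P_def)
  have hh: "int n div 2 = 2 * P + 1" using nn by simp
  define T where "T = int t"
  have P: "P \<ge> 2" using p by (simp add: P_def)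
  have T: "0 \<le> T" "T \<le> 4*P + 1" using t by (auto simp: T_def P_def)
  have sT: "int (Suc t) = T + 1" by (simp add: T_def)
  consider "T = 0" | "1 \<le> T \<and> T \<le> P - 2" | "T = P - 1" | "P \<le> T \<and> T \<le> 2*P - 2" | "T = 2*P - 1"
    | "T = 2*P" | "2*P + 1 \<le> T \<and> T \<le> 3*P" | "T = 3*P + 1" | "3*P + 2 \<le> T \<and> T \<le> 4*P"
    | "T = 4*P + 1" using T by linarith
  then have "idx n (nat (gz P T)) (nat (gz P (T + 1))) = nat (ez P T)"
  proof cases
    case 1
    then have "gz P T = 0" "gz P (T + 1) = int n - 2" "ez P T = int n - 1"
      using P nn by (auto simp: gz_def ez_def)
    then show ?thesis using idx_wrap0[OF n] n by (simp add: nat_diff_distrib)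
  next
    case 2
    then have "gz P T = 4*P + 2 - 2*T" "gz P (T + 1) = (4*P + 2 - 2*T) - 2" "ez P T = (4*P + 2 - 2*T) - 1"
      using P by (auto simp: gz_def ez_def)
    then show ?thesis using idx_m2'[OF n, of "4*P + 2 - 2*T"] 2 nn P_def by simp
  next
    case 3
    then have "gz P T = 2*P + 4" "gz P (T + 1) = (2*P + 4) - 4" "ez P T = (2*P + 4) - 2"
      using P by (auto simp: gz_def ez_def)
    then show ?thesis using idx_m4'[OF n, of "2*P + 4"] P nn P_def by simp
  next
    case 4
    then have "gz P T = 4*P - 2*T" "gz P (T + 1) = (4*P - 2*T) - 2" "ez P T = (4*P - 2*T) - 1"
      using P by (auto simp: gz_def ez_def)
    then show ?thesis using idx_m2'[OF n, of "4*P - 2*T"] 4 nn P_def by simp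
  next
    case 5
    then have "gz P T = 2" "gz P (T + 1) = int n" "ez P T = (2 + int n div 2) mod int n"
      using P nn hh by (auto simp: gz_def ez_def)
    then show ?thesis using idx_out'[OF n, of 2] n by simp
  next
    case 6
    then have "nat (gz P T) = n" "gz P (T + 1) = 2*P + 1" "ez P T = 2*P + 1"
      using P nn by (auto simp: gz_def ez_def)
    then show ?thesis using idx_in'[OF n, of "2*P + 1"] nn P by simp
  next
    case 7
    then have "gz P T = 6*P + 3 - 2*T" "gz P (T + 1) = (6*P + 3 - 2*T) - 2" "ez P T = (6*P + 3 - 2*T) - 1"
      using P by (auto simp: gz_def ez_def)
    then show ?thesis using idx_m2'[OF n, of "6*P + 3 - 2*T"] 7 nn P_def by simp
  next
    case 8
    then have "gz P T = 1" "gz P (T + 1) = int n - 1" "ez P T = 0"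
      using P nn by (auto simp: gz_def ez_def)
    then show ?thesis using idx_wrap1[OF n] n by (simp add: nat_diff_distrib)
  next
    case 9
    then have "gz P T = 10*P + 5 - 2*T" "gz P (T + 1) = (10*P + 5 - 2*T) - 2" "ez P T = (10*P + 5 - 2*T) - 1"
      using P by (auto simp: gz_def ez_def)
    then show ?thesis using idx_m2'[OF n, of "10*P + 5 - 2*T"] 9 nn P_def by simp
  next
    case 10
    then have a: "gz P T = 2*P + 3" "gz P (T + 1) = (2*P + 3) - 1" "ez P T = 1"
      using P nn hh by (auto simp: gz_def ez_def)
    have "((2*P + 3) + int n div 2 - 1) mod int n = (1 + int n) mod int n" using hh nn by simp
    also have "\<dots> = 1 mod int n" by (rule mod_add_self2)
    also have "\<dots> = 1" using nn P by simp
    finally show ?thesis using a idx_m1'[OF n, of "2*P + 3"] nn P by simp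
  qed
  then show ?thesis unfolding n_def P_def T_def sT by simp
qed

lemma R_props:
  fixes g e :: "nat \<Rightarrow> nat" and n :: nat
  assumes n: "even n" "n \<ge> 2"
    and ginj: "\<And>t t'. t < Suc n \<Longrightarrow> t' < Suc n \<Longrightarrow> g t = g t' \<Longrightarrow> t = t'"
    and grng: "\<And>t. t < Suc n \<Longrightarrow> g t < Suc n"
    and einj: "\<And>t t'. t < n \<Longrightarrow> t' < n \<Longrightarrow> e t = e t' \<Longrightarrow> t = t'"
    and erng: "\<And>t. t < n \<Longrightarrow> e t < n"
    and arc: "\<And>t. t < n \<Longrightarrow> idx n (g t) (g (Suc t)) = e t"
  shows "Suc n \<le> CB (Suc n) (Suc n - 1)"
proof -
  let ?R = "map g [0..<Suc n]"
  have "inj_on g {0..<Suc n}" using ginj by (auto simp: inj_on_def)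
  then have d: "distinct ?R" unfolding distinct_map by (simp del: upt_Suc)
  have s: "set ?R = {0..<Suc n}"
  proof -
    have "set ?R \<subseteq> {0..<Suc n}" using grng by auto
    moreover have "card (set ?R) = Suc n" using distinct_card[OF d] by simp
    ultimately show ?thesis by (simp add: card_subset_eq)
  qed
  have cs: "charset ?R = {(g t, g (Suc t)) | t. Suc t < Suc n}" by (rule charset_map_upt)
  show ?thesis
  proof (rule odd_lower_from_R[OF n d s])
    show "inj_on (\<lambda>(u,v). idx n u v) (charset ?R)"
    proof (rule inj_onI)
      fix x y assume x: "x \<in> charset ?R" and y: "y \<in> charset ?R"
        and e: "(\<lambda>(u,v). idx n u v) x = (\<lambda>(u,v). idx n u v) y"
      obtain t where t: "x = (g t, g (Suc t))" "t < n" using x cs by auto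
      obtain t' where t': "y = (g t', g (Suc t'))" "t' < n" using y cs by auto
      have "e t = e t'" using e t t' arc by simp
      then have "t = t'" using einj t t' by blast
      then show "x = y" using t t' by simp
    qed
  next
    fix u v assume "(u,v) \<in> charset ?R"
    then obtain t where "u = g t" "v = g (Suc t)" "t < n" using cs by auto
    then show "idx n u v < n" using arc erng by simp
  qed
qed

lemma G_lower: assumes p: "p \<ge> 2" shows "Suc (4*p+2) \<le> CB (Suc (4*p+2)) (Suc (4*p+2) - 1)"
proof (rule R_props[where g = "\<lambda>t. nat (gz (int p) (int t))" and e = "\<lambda>t. nat (ez (int p) (int t))"])
  show "even (4*p+2)" by simp
  show "4*p+2 \<ge> 2" by simp
next
  fix t t' assume "t < Suc (4*p+2)" "t' < Suc (4*p+2)" "nat (gz (int p) (int t)) = nat (gz (int p) (int t'))"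
  moreover then have "0 \<le> gz (int p) (int t)" "0 \<le> gz (int p) (int t')" using gz_range[of "int p"] p by auto
  ultimately show "t = t'" using gz_inj[of "int p" "int t" "int t'"] p by auto
next
  fix t assume "t < Suc (4*p+2)"
  then show "nat (gz (int p) (int t)) < Suc (4*p+2)" using gz_range[of "int p" "int t"] p by auto
next
  fix t t' assume "t < 4*p+2" "t' < 4*p+2" "nat (ez (int p) (int t)) = nat (ez (int p) (int t'))"
  moreover then have "0 \<le> ez (int p) (int t)" "0 \<le> ez (int p) (int t')" using ez_range[of "int p"] p by auto
  ultimately show "t = t'" using ez_inj[of "int p" "int t" "int t'"] p by auto
next
  fix t assume "t < 4*p+2"
  then show "nat (ez (int p) (int t)) < 4*p+2" using ez_range[of "int p" "int t"] p by auto
next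
  fix t assume "t < 4*p+2"
  then show "idx (4*p+2) (nat (gz (int p) (int t))) (nat (gz (int p) (int (Suc t)))) = nat (ez (int p) (int t))"
    using gz_arc p by blast
qed

definition ga :: "int \<Rightarrow> int \<Rightarrow> int" where
  "ga p t = (if t = 0 then 0 else if t \<le> p - 2 then 4*p - 2*t else if t \<le> 2*p - 2 then 4*p - 2 - 2*t
     else if t = 2*p - 1 then 1 else if t \<le> 3*p - 2 then 8*p - 1 - 2*t
     else if t = 3*p - 1 then 2*p + 2 else if t \<le> 4*p - 1 then 8*p + 1 - 2*t else 4*p)"

definition ea :: "int \<Rightarrow> int \<Rightarrow> int" where
  "ea p t = (if t = 0 then 4*p - 1 else if t \<le> p - 3 then 4*p - 2*t - 1 else if t = p - 2 then 2*p + 2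
     else if t \<le> 2*p - 3 then 4*p - 3 - 2*t else if t = 2*p - 2 then 2*p + 1
     else if t = 2*p - 1 then 0 else if t \<le> 3*p - 3 then 8*p - 2 - 2*t
     else if t = 3*p - 2 then 2 else if t = 3*p - 1 then 1 else if t \<le> 4*p - 2 then 8*p - 2*t else 2*p + 3)"

lemma ga_inj: "p \<ge> 3 \<Longrightarrow> 0 \<le> t \<Longrightarrow> t \<le> 4*p \<Longrightarrow> 0 \<le> t' \<Longrightarrow> t' \<le> 4*p \<Longrightarrow> ga p t = ga p t' \<Longrightarrow> t = t'"
  unfolding ga_def by (auto split: if_splits; presburger)

lemma ga_range: "p \<ge> 3 \<Longrightarrow> 0 \<le> t \<Longrightarrow> t \<le> 4*p \<Longrightarrow> 0 \<le> ga p t \<and> ga p t \<le> 4*p"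
  unfolding ga_def by auto

lemma ea_inj: "p \<ge> 3 \<Longrightarrow> 0 \<le> t \<Longrightarrow> t \<le> 4*p - 1 \<Longrightarrow> 0 \<le> t' \<Longrightarrow> t' \<le> 4*p - 1 \<Longrightarrow> ea p t = ea p t' \<Longrightarrow> t = t'"
  unfolding ea_def by (auto split: if_splits; presburger)

lemma ea_range: "p \<ge> 3 \<Longrightarrow> 0 \<le> t \<Longrightarrow> t \<le> 4*p - 1 \<Longrightarrow> 0 \<le> ea p t \<and> ea p t \<le> 4*p - 1"
  unfolding ea_def by auto

lemma ga_arc:
  fixes p :: nat
  assumes p: "p \<ge> 3" and t: "t < 4*p"
  shows "idx (4*p) (nat (ga (int p) (int t))) (nat (ga (int p) (int (Suc t)))) = nat (ea (int p) (int t))"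
proof -
  define n where "n = 4*p"
  have n: "even n" "n \<ge> 6" using p by (auto simp: n_def)
  define P where "P = int p"
  have nn: "int n = 4 * P" by (simp add: n_def P_def)
  have hh: "int n div 2 = 2 * P" using nn by simp
  define T where "T = int t"
  have P: "P \<ge> 3" using p by (simp add: P_def)
  have T: "0 \<le> T" "T \<le> 4*P - 1" using t by (auto simp: T_def P_def)
  have sT: "int (Suc t) = T + 1" by (simp add: T_def)
  consider "T = 0" | "1 \<le> T \<and> T \<le> P - 3" | "T = P - 2" | "P - 1 \<le> T \<and> T \<le> 2*P - 3" | "T = 2*P - 2"
    | "T = 2*P - 1" | "2*P \<le> T \<and> T \<le> 3*P - 3" | "T = 3*P - 2" | "T = 3*P - 1"
    | "3*P \<le> T \<and> T \<le> 4*P - 2" | "T = 4*P - 1" using T by linarith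
  then have "idx n (nat (ga P T)) (nat (ga P (T + 1))) = nat (ea P T)"
  proof cases
    case 1
    then have "ga P T = 0" "ga P (T + 1) = int n - 2" "ea P T = int n - 1"
      using P nn by (auto simp: ga_def ea_def)
    then show ?thesis using idx_wrap0[OF n] n by (simp add: nat_diff_distrib)
  next
    case 2
    then have "ga P T = 4*P - 2*T" "ga P (T + 1) = (4*P - 2*T) - 2" "ea P T = (4*P - 2*T) - 1"
      using P by (auto simp: ga_def ea_def)
    then show ?thesis using idx_m2'[OF n, of "4*P - 2*T"] 2 nn P by simp
  next
    case 3
    then have "ga P T = 2*P + 4" "ga P (T + 1) = (2*P + 4) - 4" "ea P T = (2*P + 4) - 2"
      using P by (auto simp: ga_def ea_def)
    then show ?thesis using idx_m4'[OF n, of "2*P + 4"] P nn by simp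
  next
    case 4
    then have "ga P T = 4*P - 2 - 2*T" "ga P (T + 1) = (4*P - 2 - 2*T) - 2" "ea P T = (4*P - 2 - 2*T) - 1"
      using P by (auto simp: ga_def ea_def)
    then show ?thesis using idx_m2'[OF n, of "4*P - 2 - 2*T"] 4 nn P by simp
  next
    case 5
    then have a: "ga P T = 2" "ga P (T + 1) = 2 - 1" "ea P T = 2*P + 1"
      using P by (auto simp: ga_def ea_def)
    have "(2 + int n div 2 - 1) mod int n = 2*P + 1" using hh nn P by simp
    then show ?thesis using a idx_m1'[OF n, of 2] nn P by simp
  next
    case 6
    then have "ga P T = 1" "ga P (T + 1) = int n - 1" "ea P T = 0"
      using P nn by (auto simp: ga_def ea_def)
    then show ?thesis using idx_wrap1[OF n] n by (simp add: nat_diff_distrib)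
  next
    case 7
    then have "ga P T = 8*P - 1 - 2*T" "ga P (T + 1) = (8*P - 1 - 2*T) - 2" "ea P T = (8*P - 1 - 2*T) - 1"
      using P by (auto simp: ga_def ea_def)
    then show ?thesis using idx_m2'[OF n, of "8*P - 1 - 2*T"] 7 nn P by simp
  next
    case 8
    then have a: "ga P T = 2*P + 3" "ga P (T + 1) = (2*P + 3) - 1" "ea P T = 2"
      using P by (auto simp: ga_def ea_def)
    have "((2*P + 3) + int n div 2 - 1) mod int n = (2 + int n) mod int n" using hh nn by simp
    also have "\<dots> = 2 mod int n" by (rule mod_add_self2)
    also have "\<dots> = 2" using nn P by simp
    finally show ?thesis using a idx_m1'[OF n, of "2*P + 3"] nn P by simp
  next
    case 9
    then have a: "ga P T = 2*P + 2" "ga P (T + 1) = (2*P + 2) - 1" "ea P T = 1"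
      using P by (auto simp: ga_def ea_def)
    have "((2*P + 2) + int n div 2 - 1) mod int n = (1 + int n) mod int n" using hh nn by simp
    also have "\<dots> = 1 mod int n" by (rule mod_add_self2)
    also have "\<dots> = 1" using nn P by simp
    finally show ?thesis using a idx_m1'[OF n, of "2*P + 2"] nn P by simp
  next
    case 10
    then have "ga P T = 8*P + 1 - 2*T" "ga P (T + 1) = (8*P + 1 - 2*T) - 2" "ea P T = (8*P + 1 - 2*T) - 1"
      using P by (auto simp: ga_def ea_def)
    then show ?thesis using idx_m2'[OF n, of "8*P + 1 - 2*T"] 10 nn P by simp
  next
    case 11
    then have a: "ga P T = 3" "nat (ga P (T + 1)) = n" "ea P T = 2*P + 3"
      using P nn by (auto simp: ga_def ea_def)
    have "(3 + int n div 2) mod int n = 2*P + 3" using hh nn P by simp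
    then show ?thesis using a idx_out'[OF n, of 3] nn P by simp
  qed
  then show ?thesis unfolding n_def P_def T_def sT by simp
qed

lemma A_lower: assumes p: "p \<ge> 3" shows "Suc (4*p) \<le> CB (Suc (4*p)) (Suc (4*p) - 1)"
proof (rule R_props[where g = "\<lambda>t. nat (ga (int p) (int t))" and e = "\<lambda>t. nat (ea (int p) (int t))"])
  show "even (4*p)" by simp
  show "4*p \<ge> 2" using p by simp
next
  fix t t' assume "t < Suc (4*p)" "t' < Suc (4*p)" "nat (ga (int p) (int t)) = nat (ga (int p) (int t'))"
  moreover then have "0 \<le> ga (int p) (int t)" "0 \<le> ga (int p) (int t')" using ga_range[of "int p"] p by auto
  ultimately show "t = t'" using ga_inj[of "int p" "int t" "int t'"] p by auto
next
  fix t assume "t < Suc (4*p)"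
  then show "nat (ga (int p) (int t)) < Suc (4*p)" using ga_range[of "int p" "int t"] p by auto
next
  fix t t' assume "t < 4*p" "t' < 4*p" "nat (ea (int p) (int t)) = nat (ea (int p) (int t'))"
  moreover then have "0 \<le> ea (int p) (int t)" "0 \<le> ea (int p) (int t')" using ea_range[of "int p"] p by auto
  ultimately show "t = t'" using ea_inj[of "int p" "int t" "int t'"] p by auto
next
  fix t assume "t < 4*p"
  then show "nat (ea (int p) (int t)) < 4*p" using ea_range[of "int p" "int t"] p by auto
next
  fix t assume "t < 4*p"
  then show "idx (4*p) (nat (ga (int p) (int t))) (nat (ga (int p) (int (Suc t)))) = nat (ea (int p) (int t))"
    using ga_arc p by blast
qed

lemma small7: "7 \<le> CB 7 (7 - 1)"
proof -
  have "Suc 6 \<le> CB (Suc 6) (Suc 6 - 1)"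
  proof (rule odd_lower_from_R[where R = "[0,2,6,3,1,5,4]"])
    show "inj_on (\<lambda>(u, v). idx 6 u v) (charset [0,2,6,3,1,5,4])"
      by (simp add: idx_def idxz_def)
    show "\<And>u v. (u, v) \<in> charset [0,2,6,3,1,5,4] \<Longrightarrow> idx 6 u v < 6"
      by (auto simp: idx_def idxz_def)
    show "set [0,2,6,3,1,5,4] = {0..<Suc 6}" by (auto simp: eval_nat_numeral less_Suc_eq)
  qed simp_all
  then show ?thesis by simp
qed

lemma small9: "9 \<le> CB 9 (9 - 1)"
proof -
  have "Suc 8 \<le> CB (Suc 8) (Suc 8 - 1)"
  proof (rule odd_lower_from_R[where R = "[0,4,2,1,7,6,5,3,8]"])
    show "inj_on (\<lambda>(u, v). idx 8 u v) (charset [0,4,2,1,7,6,5,3,8])"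
      by (simp add: idx_def idxz_def)
    show "\<And>u v. (u, v) \<in> charset [0,4,2,1,7,6,5,3,8] \<Longrightarrow> idx 8 u v < 8"
      by (auto simp: idx_def idxz_def)
    show "set [0,4,2,1,7,6,5,3,8] = {0..<Suc 8}" by (auto simp: eval_nat_numeral less_Suc_eq)
  qed simp_all
  then show ?thesis by simp
qed

theorem mainTheorem1:
  fixes n :: nat
  assumes "n \<ge> 2"
  shows "CB n 1 = fact n \<and> CB n 2 = fact (n - 1) \<and> CB n (n - 1) \<le> n \<and>
         (n \<notin> {3, 5} \<longrightarrow> CB n (n - 1) = n)"
proof (intro conjI impI)
  show "CB n 1 = fact n" by (rule CB1)
  show "CB n 2 = fact (n - 1)" using assms by (intro CB2) simp
  show up: "CB n (n - 1) \<le> n" using assms by (rule CB_upper)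
  assume n35: "n \<notin> {3, 5}"
  have "n \<le> CB n (n - 1)"
  proof (cases "even n")
    case True then show ?thesis using even_lower assms by blast
  next
    case False
    show ?thesis
    proof (cases "n = 7 \<or> n = 9")
      case True then show ?thesis using small7 small9 by auto
    next
      case False2: False
      have "n \<noteq> 3" "n \<noteq> 5" using n35 by auto
      then have n11: "n \<ge> 11" using False False2 assms by presburger
      show ?thesis
      proof (cases "n mod 4 = 3")
        case True
        then obtain p where p: "n = 4 * p + 3" by (metis div_mod_decomp mult.commute)
        then have "p \<ge> 2" using n11 by simp
        then have g: "Suc (4*p+2) \<le> CB (Suc (4*p+2)) (Suc (4*p+2) - 1)" by (rule G_lower)
        have e: "Suc (4*p+2) = n" using p by simp
        show ?thesis using g unfolding e .
      next
        case False3: False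
        then have "n mod 4 = 1" using False by presburger
        then obtain p where p: "n = 4 * p + 1" by (metis div_mod_decomp mult.commute)
        then have "p \<ge> 3" using n11 by simp
        then have g: "Suc (4*p) \<le> CB (Suc (4*p)) (Suc (4*p) - 1)" by (rule A_lower)
        have e: "Suc (4*p) = n" using p by simp
        show ?thesis using g unfolding e .
      qed
    qed
  qed
  then show "CB n (n - 1) = n" using up by simp
qed

end
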